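(* For every $n\ge 1$, the Poincar\'e series of $\mathrm{Kh}_{alg}(n,\infty;\mathbb{Z}/2)$ is $$P_{n}(q,t;\mathbb{Z}/2)=\prod_{i=0}^{n-1}\frac{1+q^{2i+4}t^{2i+1}}{1-q^{2i+2}t^{2i}}\ \prod_{i=0}^{\lfloor\frac{n-1}{2}\rfloor}\frac{1-q^{4i+4}t^{4i}}{1+q^{4i+4}t^{4i+1}}.$$
   Context: For a commutative ring $R$ and $n\ge1$, let $A_n(R)=R[x_0,\dots,x_{n-1}]\otimes_R\Lambda_R[\xi_0,\dots,\xi_{n-1}]$ be the free graded-commutative $R$-algebra on even generators $x_k$ and odd generators $\xi_k$ (odd generators anticommute and square to zero). It is bigraded by declaring $x_k$ to have $q$-degree $2k+2$ and $t$-degree $2k$, and $\xi_k$ to have $q$-degree $2k+4$ and $t$-degree $2k+1$. Let $d_2$ be the unique $R$-linear odd derivation (i.e. $d_2(ab)=d_2(a)b+(-1)^{|a|}a\,d_2(b)$, where $|a|$ is the number of $\xi$'s mod 2) with $d_2(x_k)=0$ and $d_2(\xi_k)=\sum_{i=0}^{k}x_ix_{k-i}$. Then $d_2^2=0$, $d_2$ preserves $q$-degree and lowers $t$-degree by 1. $\mathrm{Kh}_{alg}(n,\infty;R)$ denotes the homology $H(A_n(R),d_2)$, a bigraded $R$-algebra. For a field $F$ the Poincar\'e series is $\sum_{a,b}\dim_F \mathrm{Kh}_{alg}(n,\infty;F)^{a,b}\,q^a t^b$, where $a$ is the $q$-degree and $b$ the $t$-degree. *)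

theory Defs
  imports "HOL-Library.Z2" "HOL-Library.Function_Algebras" "HOL-Computational_Algebra.Formal_Power_Series"
begin

text \<open>Basis monomials of A_n(R): a monomial x^e xi_S is a pair (e, S), where
  e k is the exponent of x_k and S is the set of indices of the odd generators
  present (written in increasing order xi_{s1} ... xi_{sm}, s1 < ... < sm).\<close>

type_synonym mono = "(nat \<Rightarrow> nat) \<times> nat set"

definition valid_mono :: "nat \<Rightarrow> mono \<Rightarrow> bool" where
  "valid_mono n m \<longleftrightarrow> (\<forall>k\<ge>n. fst m k = 0) \<and> snd m \<subseteq> {..<n}"

definition qdeg :: "nat \<Rightarrow> mono \<Rightarrow> nat" where
  "qdeg n m = (\<Sum>k<n. fst m k * (2*k+2)) + (\<Sum>k\<in>snd m. 2*k+4)"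

definition tdeg :: "nat \<Rightarrow> mono \<Rightarrow> nat" where
  "tdeg n m = (\<Sum>k<n. fst m k * (2*k)) + (\<Sum>k\<in>snd m. 2*k+1)"

definition basis_bideg :: "nat \<Rightarrow> nat \<Rightarrow> nat \<Rightarrow> mono set" where
  "basis_bideg n a b = {m. valid_mono n m \<and> qdeg n m = a \<and> tdeg n m = b}"

text \<open>Elements of A_n(R) of bidegree (a,b): R-linear combinations (coefficient
  functions) supported on the basis monomials of that bidegree.\<close>

definition chains :: "nat \<Rightarrow> nat \<Rightarrow> nat \<Rightarrow> (mono \<Rightarrow> 'r::zero) set" where
  "chains n a b = {v. \<forall>m. v m \<noteq> 0 \<longrightarrow> m \<in> basis_bideg n a b}"

text \<open>Matrix coefficient of d_2 from basis monomial (e,S) to basis monomial (e',S'):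
  the odd derivation with d_2 x_k = 0, d_2 xi_k = sum_{i=0}^k x_i x_{k-i} sends
  x^e xi_{s1}...xi_{sm} to sum_j (-1)^(j-1) x^e (sum_i x_i x_{s_j - i}) xi_{s1}..(omit s_j)..xi_{sm}.\<close>

definition d2_coeff :: "mono \<Rightarrow> mono \<Rightarrow> 'r::comm_ring_1" where
  "d2_coeff m m' =
     (\<Sum>k\<in>snd m. if snd m' = snd m - {k} then
        (-1) ^ card {j\<in>snd m. j < k} *
        of_nat (card {i. i \<le> k \<and> fst m' =
           (\<lambda>j. fst m j + (if j = i then 1 else 0) + (if j = k - i then 1 else 0))})
      else 0)"

definition d2 :: "(mono \<Rightarrow> 'r::comm_ring_1) \<Rightarrow> mono \<Rightarrow> 'r" where
  "d2 v m' = (\<Sum>m\<in>{m. v m \<noteq> 0}. v m * d2_coeff m m')"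

definition fscale :: "'f \<Rightarrow> (mono \<Rightarrow> 'f) \<Rightarrow> mono \<Rightarrow> 'f::field" where
  "fscale c v = (\<lambda>m. c * v m)"

definition kh_dim :: "'f::field itself \<Rightarrow> nat \<Rightarrow> nat \<Rightarrow> nat \<Rightarrow> nat" where
  "kh_dim _ n a b =
     vector_space.dim (fscale :: 'f \<Rightarrow> _) {v \<in> chains n a b. d2 v = (\<lambda>_. 0)}
     - vector_space.dim (fscale :: 'f \<Rightarrow> _) (d2 ` (chains n a (b+1) :: (mono \<Rightarrow> 'f) set))"

text \<open>Poincare series as a two-variable formal power series: outer variable q,
  inner variable t; coefficient of q^a t^b is dim Kh^{a,b}.\<close>

definition poincare :: "'f::field itself \<Rightarrow> nat \<Rightarrow> rat fps fps" where
  "poincare F n = Abs_fps (\<lambda>a. Abs_fps (\<lambda>b. of_nat (kh_dim F n a b)))"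

abbreviation qvar :: "rat fps fps" where "qvar \<equiv> fps_X"
abbreviation tvar :: "rat fps fps" where "tvar \<equiv> fps_const fps_X"

end

theory Submission
  imports Defs
begin


lemma bit_double[simp]: "(x::bit) + x = 0" by (metis bit_2_eq_0 mult_2 mult_zero_left)

definition Jp :: "nat \<Rightarrow> mono \<Rightarrow> nat set" where
  "Jp n m = {j. 2*j < n \<and> (2*j \<in> snd m \<or> 2 \<le> fst m j)}"
definition crit :: "nat \<Rightarrow> mono \<Rightarrow> bool" where "crit n m \<longleftrightarrow> Jp n m = {}"
definition piv :: "nat \<Rightarrow> mono \<Rightarrow> nat" where "piv n m = Min (Jp n m)"
definition typB :: "nat \<Rightarrow> mono \<Rightarrow> bool" where
  "typB n m \<longleftrightarrow> Jp n m \<noteq> {} \<and> 2 * piv n m \<in> snd m"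
definition pre :: "nat \<Rightarrow> mono \<Rightarrow> mono" where
  "pre j m = ((fst m)(j := fst m j - 2), insert (2*j) (snd m))"
definition post :: "nat \<Rightarrow> mono \<Rightarrow> mono" where
  "post j m = ((fst m)(j := fst m j + 2), snd m - {2*j})"
definition Rs :: "nat \<Rightarrow> mono \<Rightarrow> nat set" where
  "Rs n m = {j. 2*j < n \<and> 2*j \<notin> snd m \<and> 2 \<le> fst m j}"
definition Dn :: "nat \<Rightarrow> (mono \<Rightarrow> bit) \<Rightarrow> mono \<Rightarrow> bit" where
  "Dn n v m = (\<Sum>j\<in>Rs n m. v (pre j m))"
definition Hh :: "nat \<Rightarrow> (mono \<Rightarrow> bit) \<Rightarrow> mono \<Rightarrow> bit" where
  "Hh n v m = (if typB n m then v (post (piv n m) m) else 0)"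
definition Pp :: "nat \<Rightarrow> (mono \<Rightarrow> bit) \<Rightarrow> mono \<Rightarrow> bit" where
  "Pp n v m = (if crit n m then v m else 0)"

lemma finite_Jp[simp]: "finite (Jp n m)"
  by (rule finite_subset[of _ "{..<n}"]) (auto simp: Jp_def)
lemma finite_Rs[simp]: "finite (Rs n m)"
  by (rule finite_subset[of _ "{..<n}"]) (auto simp: Rs_def)
lemma Rs_sub_Jp: "Rs n m \<subseteq> Jp n m" by (auto simp: Rs_def Jp_def)

lemma Jp_pre: "j \<in> Rs n m \<Longrightarrow> Jp n (pre j m) = Jp n m"
  by (auto simp: Jp_def Rs_def pre_def)
lemma Jp_post: "2*j \<in> snd m \<Longrightarrow> Jp n (post j m) = Jp n m"
  by (auto simp: Jp_def post_def)
lemma piv_in: "Jp n m \<noteq> {} \<Longrightarrow> piv n m \<in> Jp n m" by (simp add: piv_def)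
lemma piv_le: "j \<in> Jp n m \<Longrightarrow> piv n m \<le> j" by (simp add: piv_def)

lemma pre_post_id: "2*j \<in> snd m \<Longrightarrow> pre j (post j m) = m"
  by (cases m) (auto simp: pre_def post_def)
lemma post_pre_id: "2 \<le> fst m j \<Longrightarrow> 2*j \<notin> snd m \<Longrightarrow> post j (pre j m) = m"
  by (cases m) (auto simp: pre_def post_def fun_eq_iff)
lemma pre_post_comm: "j \<noteq> k \<Longrightarrow> pre j (post k m) = post k (pre j m)"
  by (cases m) (auto simp: pre_def post_def fun_upd_twist)
lemma pre_pre_comm: "j \<noteq> k \<Longrightarrow> pre j (pre k m) = pre k (pre j m)"
  by (cases m) (auto simp: pre_def fun_upd_twist)
lemma Rs_pre: "j \<in> Rs n m \<Longrightarrow> Rs n (pre j m) = Rs n m - {j}"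
  by (auto simp: Rs_def pre_def)
lemma Rs_post: "2*j \<in> snd m \<Longrightarrow> 2*j < n \<Longrightarrow> Rs n (post j m) = insert j (Rs n m)"
  by (auto simp: Rs_def post_def)

lemma homotopy: "Dn n (Hh n v) m + Hh n (Dn n v) m + Pp n v m = v m"
proof (cases "crit n m")
  case True
  then have R: "Rs n m = {}" using Rs_sub_Jp[of n m] by (auto simp: crit_def)
  have "\<not> typB n m" using True by (simp add: crit_def typB_def)
  then show ?thesis using True R by (simp add: Dn_def Hh_def Pp_def)
next
  case False
  hence J: "Jp n m \<noteq> {}" by (simp add: crit_def)
  define j0 where "j0 = piv n m"
  have j0J: "j0 \<in> Jp n m" using J piv_in j0_def by auto
  have P0: "Pp n v m = 0" using False by (simp add: Pp_def)
  show ?thesis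
  proof (cases "2*j0 \<in> snd m")
    case B: True
    have tB: "typB n m" using J B by (simp add: typB_def j0_def)
    define p where "p = post j0 m"
    have j0n: "2*j0 < n" using j0J by (simp add: Jp_def)
    have Rp: "Rs n p = insert j0 (Rs n m)" using Rs_post[OF B j0n] p_def by simp
    have j0R: "j0 \<notin> Rs n m" using B by (simp add: Rs_def)
    have "Hh n (Dn n v) m = Dn n v p" using tB by (simp add: Hh_def p_def j0_def)
    also have "\<dots> = v (pre j0 p) + (\<Sum>j\<in>Rs n m. v (pre j p))"
      by (simp add: Dn_def Rp j0R)
    also have "pre j0 p = m" using pre_post_id[OF B] p_def by simp
    finally have HDn: "Hh n (Dn n v) m = v m + (\<Sum>j\<in>Rs n m. v (pre j p))" .
    have "Dn n (Hh n v) m = (\<Sum>j\<in>Rs n m. Hh n v (pre j m))" by (simp add: Dn_def)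
    also have "\<dots> = (\<Sum>j\<in>Rs n m. v (pre j p))"
    proof (rule sum.cong[OF refl])
      fix j assume jR: "j \<in> Rs n m"
      have jne: "j \<noteq> j0" using jR j0R by auto
      have Jeq: "Jp n (pre j m) = Jp n m" by (rule Jp_pre[OF jR])
      have pv: "piv n (pre j m) = j0" by (simp add: piv_def Jeq j0_def)
      have "typB n (pre j m)" unfolding typB_def Jeq pv using J B by (simp add: pre_def)
      then show "Hh n v (pre j m) = v (pre j p)"
        by (simp add: Hh_def pv p_def pre_post_comm[OF jne])
    qed
    finally have DnH: "Dn n (Hh n v) m = (\<Sum>j\<in>Rs n m. v (pre j p))" .
    show ?thesis unfolding HDn DnH P0
      by (simp only: add_0_right add.left_commute[of "\<Sum>j\<in>Rs n m. v (pre j p)" "v m"] bit_double)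
  next
    case A: False
    have ntB: "\<not> typB n m" using A by (simp add: typB_def j0_def)
    have j0R: "j0 \<in> Rs n m" using j0J A by (simp add: Jp_def Rs_def)
    have "Dn n (Hh n v) m = (\<Sum>j\<in>Rs n m. if j = j0 then v m else 0)"
      unfolding Dn_def
    proof (rule sum.cong[OF refl])
      fix j assume jR: "j \<in> Rs n m"
      have Jeq: "Jp n (pre j m) = Jp n m" by (rule Jp_pre[OF jR])
      have pv: "piv n (pre j m) = j0" by (simp add: piv_def Jeq j0_def)
      show "Hh n v (pre j m) = (if j = j0 then v m else 0)"
      proof (cases "j = j0")
        case True
        have "typB n (pre j m)" unfolding typB_def Jeq pv using J by (simp add: pre_def True)
        moreover have "post j0 (pre j0 m) = m" using j0R by (intro post_pre_id) (auto simp: Rs_def)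
        ultimately show ?thesis by (simp add: Hh_def pv[unfolded True] True)
      next
        case False
        have "\<not> typB n (pre j m)" unfolding typB_def Jeq pv using A False by (simp add: pre_def)
        then show ?thesis by (simp add: Hh_def False)
      qed
    qed
    also have "\<dots> = v m" using j0R by simp
    finally show ?thesis using ntB P0 by (simp add: Hh_def)
  qed
qed

lemma pair_sum_bit:
  assumes "finite R" "\<And>j k. f j k = f k j"
  shows "(\<Sum>j\<in>R. \<Sum>k\<in>R - {j}. f j k) = (0::bit)"
  using assms(1)
proof (induction R rule: finite_induct)
  case empty then show ?case by simp
next
  case (insert a R)
  have "(\<Sum>j\<in>insert a R. \<Sum>k\<in>insert a R - {j}. f j k)
      = (\<Sum>k\<in>R. f a k) + (\<Sum>j\<in>R. \<Sum>k\<in>insert a (R - {j}). f j k)"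
  proof -
    have "insert a R - {a} = R" using insert by auto
    moreover have "\<And>j. j \<in> R \<Longrightarrow> insert a R - {j} = insert a (R - {j})" using insert by auto
    ultimately show ?thesis using insert by (simp add: sum.insert)
  qed
  also have "(\<Sum>j\<in>R. \<Sum>k\<in>insert a (R - {j}). f j k) = (\<Sum>j\<in>R. f j a + (\<Sum>k\<in>R - {j}. f j k))"
    using insert by (intro sum.cong) (auto simp: sum.insert)
  also have "\<dots> = (\<Sum>j\<in>R. f j a) + (\<Sum>j\<in>R. \<Sum>k\<in>R - {j}. f j k)" by (rule sum.distrib)
  also have "(\<Sum>j\<in>R. f j a) = (\<Sum>j\<in>R. f a j)" by (rule sum.cong[OF refl], rule assms(2))
  also have "(\<Sum>j\<in>R. \<Sum>k\<in>R - {j}. f j k) = 0" by (rule insert.IH)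
  finally show ?case by (simp only: add_0_right bit_double)
qed

lemma Dn_Dn: "Dn n (Dn n v) m = 0"
proof -
  have "Dn n (Dn n v) m = (\<Sum>j\<in>Rs n m. \<Sum>k\<in>Rs n m - {j}. v (pre k (pre j m)))"
    unfolding Dn_def
  proof (rule sum.cong[OF refl])
    fix j assume "j \<in> Rs n m"
    then show "(\<Sum>k\<in>Rs n (pre j m). v (pre k (pre j m))) = (\<Sum>k\<in>Rs n m - {j}. v (pre k (pre j m)))"
      by (simp only: Rs_pre)
  qed
  also have "\<dots> = 0"
  proof (rule pair_sum_bit)
    fix j k show "v (pre k (pre j m)) = v (pre j (pre k m))"
      by (cases "j = k") (simp_all add: pre_pre_comm)
  qed simp
  finally show ?thesis .
qed

lemma Pp_Dn: "Pp n (Dn n v) m = 0"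
  using Rs_sub_Jp[of n m] by (auto simp: Pp_def Dn_def crit_def)

lemma Dn_Pp: "Dn n (Pp n v) m = 0"
proof -
  have "\<And>j. j \<in> Rs n m \<Longrightarrow> \<not> crit n (pre j m)"
    using Rs_sub_Jp by (fastforce simp: crit_def Jp_pre)
  then show ?thesis by (simp add: Dn_def Pp_def)
qed




lemma card_pairs_bit:
  fixes e g :: "nat \<Rightarrow> nat"
  shows "(of_nat (card {i. i \<le> k \<and> g = (\<lambda>j. e j + (if j = i then 1 else 0) + (if j = k - i then 1 else 0))}) :: bit)
     = (if even k \<and> g = e(k div 2 := e (k div 2) + 2) then 1 else 0)"
proof -
  define F where "F = (\<lambda>i. (\<lambda>j. e j + (if j = i then 1 else 0) + (if j = k - i then 1 else 0)))"
  define T where "T = {i. i \<le> k \<and> g = F i}"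
  have T: "{i. i \<le> k \<and> g = (\<lambda>j. e j + (if j = i then 1 else 0) + (if j = k - i then 1 else 0))} = T"
    by (simp add: T_def F_def)
  show ?thesis
  proof (cases "\<exists>i. i \<le> k \<and> g = F i")
    case True
    then obtain i where i: "i \<le> k" "g = F i" by blast
    have Fsym: "F (k - i) = F i" using i(1) by (auto simp: F_def fun_eq_iff)
    have TT: "T = {i, k - i}"
    proof
      show "T \<subseteq> {i, k - i}"
      proof
        fix i' assume "i' \<in> T"
        then have "F i' = F i" using i by (simp add: T_def)
        then have "F i' i' = F i i'" by simp
        then have "i' = i \<or> i' = k - i" by (auto simp: F_def split: if_splits)
        then show "i' \<in> {i, k - i}" by simp
      qed
      show "{i, k - i} \<subseteq> T" using i Fsym by (auto simp: T_def)
    qed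
    show ?thesis
    proof (cases "i = k - i")
      case True
      then have ev: "even k" "k div 2 = i" using i(1) by presburger+
      have "g = e(k div 2 := e (k div 2) + 2)" using i True[symmetric] ev by (auto simp: F_def fun_eq_iff)
      moreover have "card T = 1" unfolding TT using True[symmetric] by simp
      ultimately show ?thesis unfolding T using ev by simp
    next
      case False
      have c2: "card T = 2" unfolding TT using False by simp
      have "\<not> (even k \<and> g = e(k div 2 := e (k div 2) + 2))"
      proof
        assume h: "even k \<and> g = e(k div 2 := e (k div 2) + 2)"
        then have "g i = F i i" using i by simp
        then show False using h False i(1) by (auto simp: F_def split: if_splits)
      qed
      moreover have "(of_nat 2 :: bit) = 0" by simp
      ultimately show ?thesis unfolding T c2 by simp
    qed
  next
    case False
    then have Te: "T = {}" by (auto simp: T_def)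
    have "\<not> (even k \<and> g = e(k div 2 := e (k div 2) + 2))"
    proof
      assume h: "even k \<and> g = e(k div 2 := e (k div 2) + 2)"
      have "k div 2 \<le> k" by simp
      moreover have "g = F (k div 2)" using h by (auto simp: F_def fun_eq_iff)
      ultimately show False using False by blast
    qed
    then show ?thesis unfolding T Te by simp
  qed
qed

definition rel :: "mono \<Rightarrow> mono \<Rightarrow> bool" where
  "rel m m' \<longleftrightarrow> (\<exists>k\<in>snd m. snd m' = snd m - {k} \<and> even k \<and>
      fst m' = (fst m)(k div 2 := fst m (k div 2) + 2))"

lemma sum_unique_indicator:
  assumes "finite S" "\<And>k k'. k \<in> S \<Longrightarrow> k' \<in> S \<Longrightarrow> P k \<Longrightarrow> P k' \<Longrightarrow> k = k'"
  shows "(\<Sum>k\<in>S. if P k then (1::bit) else 0) = (if \<exists>k\<in>S. P k then 1 else 0)"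
proof (cases "\<exists>k\<in>S. P k")
  case True
  then obtain k0 where k0: "k0 \<in> S" "P k0" by blast
  have "(\<Sum>k\<in>S. if P k then (1::bit) else 0) = (\<Sum>k\<in>S. if k = k0 then 1 else 0)"
    using assms(2) k0 by (intro sum.cong) auto
  also have "\<dots> = 1" using k0 assms(1) by simp
  finally show ?thesis using True by simp
qed auto

lemma neg1_bit: "(-1::bit) = 1" by simp
lemma pw_neg1_bit: "(-1::bit)^c = 1" by (simp only: neg1_bit power_one)
lemma coeff_term: "(if A then (-1::bit)^c * (if B then 1 else 0) else 0) = (if A \<and> B then 1 else 0)"
  by (simp only: pw_neg1_bit mult_1 if_if_eq_conj)

lemma diff_single_unique: "k \<in> S \<Longrightarrow> k' \<in> S \<Longrightarrow> T = S - {k} \<and> P \<Longrightarrow> T = S - {k'} \<and> Q \<Longrightarrow> k = k'"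
  by blast

lemma d2_coeff_bit:
  assumes "finite (snd m)"
  shows "(d2_coeff m m' :: bit) = (if rel m m' then 1 else 0)"
proof -
  have "(d2_coeff m m' :: bit) = (\<Sum>k\<in>snd m. if snd m' = snd m - {k} \<and> even k \<and>
      fst m' = (fst m)(k div 2 := fst m (k div 2) + 2) then 1 else 0)"
    unfolding d2_coeff_def
  proof (rule sum.cong[OF refl])
    fix k
    show "(if snd m' = snd m - {k}
         then (- 1) ^ card {j \<in> snd m. j < k} *
              of_nat (card {i. i \<le> k \<and> fst m' = (\<lambda>j. fst m j + (if j = i then 1 else 0) + (if j = k - i then 1 else 0))})
         else 0) = (if snd m' = snd m - {k} \<and> even k \<and>
      fst m' = (fst m)(k div 2 := fst m (k div 2) + 2) then (1::bit) else 0)"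
      unfolding card_pairs_bit by (rule coeff_term)
  qed
  also have "\<dots> = (if rel m m' then 1 else 0)"
  proof -
    show ?thesis unfolding rel_def
      by (rule sum_unique_indicator[OF assms]) (rule diff_single_unique; assumption)
  qed
  finally show ?thesis .
qed

lemma rel_pre:
  assumes j: "j \<in> Rs n m'"
  shows "rel (pre j m') m'"
proof -
  have j2: "2 \<le> fst m' j" "2*j \<notin> snd m'" using j by (auto simp: Rs_def)
  have f: "fst m' = (fst (pre j m'))(2 * j div 2 := fst (pre j m') (2 * j div 2) + 2)"
    using j2 by (simp add: fun_eq_iff pre_def)
  have sn: "snd m' = snd (pre j m') - {2 * j}" using j2 by (auto simp: pre_def)
  have "2*j \<in> snd (pre j m')" by (simp add: pre_def)
  then show ?thesis unfolding rel_def
    by (intro bexI[where x="2*j"] conjI sn f) simp_all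
qed

lemma rel_imp_pre:
  assumes "valid_mono n m" "rel m m'"
  shows "m \<in> (\<lambda>j. pre j m') ` Rs n m'"
proof -
  obtain k where k: "k \<in> snd m" "even k" "snd m' = snd m - {k}"
    "fst m' = (fst m)(k div 2 := fst m (k div 2) + 2)" using assms(2) by (auto simp: rel_def)
  obtain j where kj: "k = 2*j" using k(2) by (rule evenE)
  have kd: "k div 2 = j" using kj by simp
  have "k < n" using assms(1) k(1) by (auto simp: valid_mono_def)
  then have jR: "j \<in> Rs n m'" unfolding Rs_def mem_Collect_eq k(3) k(4)[unfolded kd]
    using kj by simp
  have e1: "fst (pre j m') = fst m" unfolding pre_def fst_conv k(4)[unfolded kd] by simp
  have e2: "snd (pre j m') = snd m" unfolding pre_def snd_conv k(3) kj[symmetric] using k(1) by auto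
  have "pre j m' = m" using e1 e2 by (rule prod_eqI)
  then show ?thesis using jR by blast
qed

lemma inj_pre: "inj_on (\<lambda>j. pre j m') (Rs n m')"
proof
  fix j j' assume "j \<in> Rs n m'" "j' \<in> Rs n m'" "pre j m' = pre j' m'"
  then have "insert (2*j) (snd m') = insert (2*j') (snd m')" "2*j \<notin> snd m'"
    by (auto simp: pre_def Rs_def)
  then have "2*j = 2*j'" by blast
  then show "j = j'" by simp
qed

lemma d2_eq_Dn:
  fixes v :: "mono \<Rightarrow> bit"
  assumes fin: "finite {m. v m \<noteq> 0}" and val: "\<And>m. v m \<noteq> 0 \<Longrightarrow> valid_mono n m"
  shows "d2 v = Dn n v"
proof
  fix m'
  define S where "S = {m. v m \<noteq> 0}"
  define A where "A = (\<lambda>j. pre j m') ` Rs n m'"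
  define c where "c = (\<lambda>m. d2_coeff m m' :: bit)"
  have finA: "finite A" by (simp add: A_def)
  have finS: "finite S" unfolding S_def by (rule fin)
  have cval: "c m = (if rel m m' then 1 else 0)" if "valid_mono n m" for m
  proof -
    have "snd m \<subseteq> {..<n}" using that by (simp add: valid_mono_def)
    then have "finite (snd m)" by (rule finite_subset) simp
    then show ?thesis by (simp add: c_def d2_coeff_bit)
  qed
  have "d2 v m' = (\<Sum>m\<in>S. v m * c m)" by (simp only: d2_def S_def c_def)
  also have "\<dots> = (\<Sum>m\<in>S \<union> A. v m * c m)"
  proof (rule sum.mono_neutral_left)
    show "\<forall>i\<in>S \<union> A - S. v i * c i = 0"
    proof
      fix i assume "i \<in> S \<union> A - S"
      then have "v i = 0" unfolding S_def by blast
      then show "v i * c i = 0" by (simp only: mult_zero_left)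
    qed
  qed (use finA finS in blast)+
  also have "\<dots> = (\<Sum>m\<in>A. v m * c m)"
  proof (rule sum.mono_neutral_right)
    show "\<forall>m\<in>S \<union> A - A. v m * c m = 0"
    proof
      fix m assume m: "m \<in> S \<union> A - A"
      then have "m \<in> S" by blast
      then have vm: "valid_mono n m" unfolding S_def by (intro val) blast
      have "m \<notin> A" using m by blast
      then have "\<not> rel m m'" using rel_imp_pre[OF vm] unfolding A_def by blast
      then show "v m * c m = 0" using cval[OF vm] by simp
    qed
  qed (use finA finS in blast)+
  also have "\<dots> = (\<Sum>m\<in>A. v m)"
  proof (rule sum.cong[OF refl])
    fix m assume m: "m \<in> A"
    show "v m * c m = v m"
    proof (cases "v m = 0")
      case False
      then have vm: "valid_mono n m" using val by blast
      from m obtain j where "j \<in> Rs n m'" "m = pre j m'" unfolding A_def by blast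
      then have "rel m m'" using rel_pre[of j n m'] by simp
      then show ?thesis using cval[OF vm] by simp
    qed simp
  qed
  also have "\<dots> = (\<Sum>j\<in>Rs n m'. v (pre j m'))"
    unfolding A_def by (rule sum.reindex[OF inj_pre, unfolded comp_def])
  also have "\<dots> = Dn n v m'" by (simp add: Dn_def)
  finally show "d2 v m' = Dn n v m'" .
qed


lemma sum_upd_nat:
  fixes e w :: "nat \<Rightarrow> nat"
  assumes "j < n"
  shows "(\<Sum>k<n. (e(j := e j + c)) k * w k) = (\<Sum>k<n. e k * w k) + c * w j"
proof -
  have "(\<Sum>k<n. (e(j := e j + c)) k * w k) = (\<Sum>k<n. e k * w k + (if k = j then c * w j else 0))"
    by (intro sum.cong) (auto simp: algebra_simps)
  also have "\<dots> = (\<Sum>k<n. e k * w k) + c * w j" using assms by (simp add: sum.distrib)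
  finally show ?thesis .
qed

lemma valid_post_iff:
  assumes "2*j \<in> snd m" "2*j < n"
  shows "valid_mono n (post j m) \<longleftrightarrow> valid_mono n m"
proof -
  have jn: "j < n" using assms(2) by simp
  show ?thesis using assms jn by (auto simp: valid_mono_def post_def split: if_splits)
qed

lemma deg_post:
  assumes v: "valid_mono n m" and j: "2*j \<in> snd m" "2*j < n"
  shows "qdeg n (post j m) = qdeg n m" "tdeg n (post j m) + 1 = tdeg n m"
proof -
  have jn: "j < n" using j(2) by simp
  have fS: "finite (snd m)" using v by (auto simp: valid_mono_def intro: finite_subset)
  have s1: "(\<Sum>k\<in>snd m. 2*k+4) = (4*j+4) + (\<Sum>k\<in>snd m - {2*j}. 2*k+4)"
    using sum.remove[OF fS j(1), of "\<lambda>k. 2*k+4"] by simp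
  have s2: "(\<Sum>k\<in>snd m. 2*k+1) = (4*j+1) + (\<Sum>k\<in>snd m - {2*j}. 2*k+1)"
    using sum.remove[OF fS j(1), of "\<lambda>k. 2*k+1"] by simp
  have x1: "(\<Sum>k<n. fst (post j m) k * (2*k+2)) = (\<Sum>k<n. fst m k * (2*k+2)) + 2 * (2*j+2)"
    unfolding post_def fst_conv by (rule sum_upd_nat[OF jn])
  have x2: "(\<Sum>k<n. fst (post j m) k * (2*k)) = (\<Sum>k<n. fst m k * (2*k)) + 2 * (2*j)"
    unfolding post_def fst_conv by (rule sum_upd_nat[OF jn])
  have y: "snd (post j m) = snd m - {2*j}" by (simp add: post_def)
  show "qdeg n (post j m) = qdeg n m"
    unfolding qdeg_def x1 y s1 by simp
  show "tdeg n (post j m) + 1 = tdeg n m"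
    unfolding tdeg_def x2 y s2 by simp
qed

lemma finite_basis: "finite (basis_bideg n a b)"
proof -
  have "basis_bideg n a b \<subseteq> {f. \<forall>x. (x \<in> {..<n} \<longrightarrow> f x \<in> {..a}) \<and> (x \<notin> {..<n} \<longrightarrow> f x = 0)} \<times> Pow {..<n}"
  proof
    fix m assume m: "m \<in> basis_bideg n a b"
    have "fst m k \<le> a" if "k < n" for k
    proof -
      have "fst m k \<le> fst m k * (2*k+2)" by simp
      also have "\<dots> \<le> (\<Sum>k<n. fst m k * (2*k+2))" by (rule member_le_sum) (use that in auto)
      also have "\<dots> \<le> qdeg n m" by (simp add: qdeg_def)
      finally show ?thesis using m by (simp add: basis_bideg_def)
    qed
    then show "m \<in> {f. \<forall>x. (x \<in> {..<n} \<longrightarrow> f x \<in> {..a}) \<and> (x \<notin> {..<n} \<longrightarrow> f x = 0)} \<times> Pow {..<n}"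
      using m by (cases m) (auto simp: basis_bideg_def valid_mono_def)
  qed
  moreover have "finite ({f. \<forall>x. (x \<in> {..<n} \<longrightarrow> f x \<in> {..a}) \<and> (x \<notin> {..<n} \<longrightarrow> f x = 0)} \<times> Pow {..<n})"
    by (intro finite_cartesian_product finite_set_of_finite_funs) auto
  ultimately show ?thesis by (rule finite_subset)
qed


definition dl :: "mono \<Rightarrow> mono \<Rightarrow> bit" where "dl m = (\<lambda>m'. if m' = m then 1 else 0)"

lemma fscale_apply: "fscale c v m = c * v m" by (simp add: fscale_def)

interpretation V: vector_space "fscale :: bit \<Rightarrow> (mono \<Rightarrow> bit) \<Rightarrow> mono \<Rightarrow> bit"
  by unfold_locales (rule ext; simp only: fscale_apply plus_fun_apply distrib_left distrib_right mult.assoc mult_1_left)+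

lemma mod_fscale: "module (fscale :: bit \<Rightarrow> (mono \<Rightarrow> bit) \<Rightarrow> mono \<Rightarrow> bit)"
  using module_iff_vector_space V.vector_space_axioms by blast

lemma sum_fun_apply: "(\<Sum>i\<in>A. f i) x = (\<Sum>i\<in>A. f i x)"
  by (induction A rule: infinite_finite_induct) auto

lemma hom_Dn: "module_hom fscale fscale (Dn n)"
  unfolding module_hom_iff
proof (intro conjI allI mod_fscale)
  fix x y :: "mono \<Rightarrow> bit"
  show "Dn n (x + y) = Dn n x + Dn n y"
    by (rule ext) (simp only: Dn_def plus_fun_apply sum.distrib)
next
  fix c :: bit and x :: "mono \<Rightarrow> bit"
  show "Dn n (fscale c x) = fscale c (Dn n x)"
    by (rule ext) (simp only: Dn_def fscale_apply sum_distrib_left)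
qed

lemma hom_Hh: "module_hom fscale fscale (Hh n)"
  unfolding module_hom_iff
proof (intro conjI allI mod_fscale)
  fix x y :: "mono \<Rightarrow> bit"
  show "Hh n (x + y) = Hh n x + Hh n y"
    by (rule ext) (simp add: Hh_def)
next
  fix c :: bit and x :: "mono \<Rightarrow> bit"
  show "Hh n (fscale c x) = fscale c (Hh n x)"
    by (rule ext) (simp add: Hh_def fscale_apply)
qed

lemma hom_Pp: "module_hom fscale fscale (Pp n)"
  unfolding module_hom_iff
proof (intro conjI allI mod_fscale)
  fix x y :: "mono \<Rightarrow> bit"
  show "Pp n (x + y) = Pp n x + Pp n y"
    by (rule ext) (simp add: Pp_def)
next
  fix c :: bit and x :: "mono \<Rightarrow> bit"
  show "Pp n (fscale c x) = fscale c (Pp n x)"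
    by (rule ext) (simp add: Pp_def fscale_apply)
qed

lemma hom_add: "module_hom fscale fscale f \<Longrightarrow> module_hom fscale fscale g \<Longrightarrow>
    module_hom fscale fscale (\<lambda>x::mono \<Rightarrow> bit. f x + g x :: mono \<Rightarrow> bit)"
  unfolding module_hom_iff
  by (auto simp: fscale_def fun_eq_iff algebra_simps)

lemma inj_dl: "inj dl"
proof
  fix m m' assume "dl m = dl m'"
  then have "dl m m = dl m' m" by simp
  then show "m = m'" by (simp add: dl_def split: if_splits)
qed

lemma fun_as_sum:
  assumes "finite X" "\<And>m. v m \<noteq> 0 \<Longrightarrow> m \<in> X"
  shows "v = (\<Sum>m\<in>X. fscale (v m) (dl m))"
proof
  fix m'
  have "(\<Sum>m\<in>X. fscale (v m) (dl m)) m' = (\<Sum>m\<in>X. if m = m' then v m' else 0)"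
    unfolding sum_fun_apply by (intro sum.cong refl) (simp add: fscale_apply dl_def)
  also have "\<dots> = (if m' \<in> X then v m' else 0)" using assms(1) by (simp add: sum.delta')
  also have "\<dots> = v m'"
  proof (cases "m' \<in> X")
    case False
    then have "v m' = 0" using assms(2) by blast
    then show ?thesis using False by simp
  qed simp
  finally show "v m' = (\<Sum>m\<in>X. fscale (v m) (dl m)) m'" by simp
qed

lemma in_span_dl:
  assumes "finite X" "\<And>m. v m \<noteq> 0 \<Longrightarrow> m \<in> X"
  shows "v \<in> V.span (dl ` X)"
proof -
  have e: "v = (\<Sum>m\<in>X. fscale (v m) (dl m))" using assms by (rule fun_as_sum)
  show ?thesis by (subst e) (intro V.span_sum V.span_scale V.span_base imageI)
qed

lemma indep_dl: "V.independent (dl ` X)"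
  unfolding V.independent_explicit_finite_subsets
proof (intro allI impI ballI)
  fix S u w
  assume S: "S \<subseteq> dl ` X" and fS: "finite S" and s0: "(\<Sum>v\<in>S. fscale (u v) v) = 0" and w: "w \<in> S"
  obtain m where m: "w = dl m" using S w by blast
  have "0 = (\<Sum>v\<in>S. fscale (u v) v) m" using s0 by simp
  also have "\<dots> = (\<Sum>v\<in>S. if v = w then u v else 0)"
    unfolding sum_fun_apply
  proof (intro sum.cong refl)
    fix v assume v: "v \<in> S"
    then obtain m' where m': "v = dl m'" using S by blast
    have vw: "(v = w) = (m' = m)" unfolding m m' using inj_dl by (auto dest: injD)
    have "v m = (if v = w then 1 else 0)" unfolding vw by (simp add: m' dl_def eq_commute)
    then show "fscale (u v) v m = (if v = w then u v else 0)" by (simp add: fscale_apply)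
  qed
  also have "\<dots> = u w" using fS w by (simp add: sum.delta')
  finally show "u w = 0" by simp
qed

lemma subspace_gf:
  fixes f g :: "(mono \<Rightarrow> bit) \<Rightarrow> (mono \<Rightarrow> bit)"
  assumes f: "module_hom fscale fscale f" and g: "module_hom fscale fscale g"
  shows "V.subspace {a. g (f a) = a}"
  apply (rule V.subspaceI)
  apply (simp_all add: module_hom.add[OF f] module_hom.add[OF g] module_hom.scale[OF f]
          module_hom.scale[OF g] module_hom.zero[OF f] module_hom.zero[OF g])
  done

lemma leftinv_indep:
  fixes f g :: "(mono \<Rightarrow> bit) \<Rightarrow> (mono \<Rightarrow> bit)"
  assumes f: "module_hom fscale fscale f" and g: "module_hom fscale fscale g"
    and gf: "\<And>x. x \<in> S \<Longrightarrow> g (f x) = x" and ind: "V.independent S"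
  shows "V.independent (f ` S)" "inj_on f S"
proof -
  have gfs: "g (f x) = x" if "x \<in> V.span S" for x :: "mono \<Rightarrow> bit"
    using that
  proof (induction rule: V.span_induct)
    case base
    show ?case using subspace_gf[OF f g] by simp
  next
    case step then show ?case by (rule gf)
  qed
  have inj: "inj_on f (V.span S)"
    by (rule inj_on_inverseI[of _ g]) (rule gfs)
  show "V.independent (f ` S)" by (rule module_hom.independent_injective_image[OF f ind inj])
  show "inj_on f S" using inj V.span_superset by (rule inj_on_subset)
qed


lemma homotopy_fun: "Dn n (Hh n v) + Hh n (Dn n v) + Pp n v = v"
  by (rule ext) (simp only: plus_fun_apply homotopy)
lemma Dn_zero: "Dn n 0 = 0" by (rule ext) (simp add: Dn_def)
lemma Hh_zero: "Hh n 0 = 0" by (rule ext) (simp add: Hh_def)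
lemma Pp_zero: "Pp n 0 = 0" by (rule ext) (simp add: Pp_def)
lemma DnDn_fun: "Dn n (Dn n v) = 0" by (rule ext) (simp only: Dn_Dn zero_fun_apply)
lemma PpDn_fun: "Pp n (Dn n v) = 0" by (rule ext) (simp only: Pp_Dn zero_fun_apply)
lemma DnPp_fun: "Dn n (Pp n v) = 0" by (rule ext) (simp only: Dn_Pp zero_fun_apply)

lemma post_piv:
  assumes "typB n m"
  shows "\<not> typB n (post (piv n m) m)" "\<not> crit n (post (piv n m) m)"
proof -
  define j0 where "j0 = piv n m"
  have B: "2*j0 \<in> snd m" "Jp n m \<noteq> {}" using assms by (auto simp: typB_def j0_def)
  have J: "Jp n (post j0 m) = Jp n m" by (rule Jp_post[OF B(1)])
  have pv: "piv n (post j0 m) = j0" unfolding piv_def J by (simp add: j0_def piv_def)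
  show "\<not> typB n (post (piv n m) m)" unfolding j0_def[symmetric] typB_def pv
    by (simp add: post_def)
  show "\<not> crit n (post (piv n m) m)" unfolding j0_def[symmetric] crit_def J using B(2) .
qed

lemma typB_not_crit: "typB n m \<Longrightarrow> \<not> crit n m" by (simp add: typB_def crit_def)

lemma Hh_dl_typB: "typB n u \<Longrightarrow> Hh n (dl u) = 0"
proof (rule ext)
  fix m assume u: "typB n u"
  show "Hh n (dl u) m = 0 m"
  proof (cases "typB n m")
    case True
    then have "post (piv n m) m \<noteq> u" using post_piv(1)[OF True] u by metis
    then show ?thesis using True by (simp add: Hh_def dl_def)
  qed (simp add: Hh_def)
qed

lemma Hh_dl_crit: "crit n c \<Longrightarrow> Hh n (dl c) = 0"
proof (rule ext)
  fix m assume c: "crit n c"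
  show "Hh n (dl c) m = 0 m"
  proof (cases "typB n m")
    case True
    then have "post (piv n m) m \<noteq> c" using post_piv(2)[OF True] c by metis
    then show ?thesis using True by (simp add: Hh_def dl_def)
  qed (simp add: Hh_def)
qed

lemma Pp_dl_typB: "typB n u \<Longrightarrow> Pp n (dl u) = 0"
proof (rule ext)
  fix m assume u: "typB n u"
  show "Pp n (dl u) m = 0 m"
  proof (cases "crit n m")
    case True
    then have "m \<noteq> u" using typB_not_crit[OF u] by metis
    then show ?thesis using True by (simp add: Pp_def dl_def)
  qed (simp add: Pp_def)
qed

lemma Pp_dl_crit: "crit n c \<Longrightarrow> Pp n (dl c) = dl c"
proof (rule ext)
  fix m assume c: "crit n c"
  show "Pp n (dl c) m = dl c m"
  proof (cases "crit n m")
    case False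
    then have "m \<noteq> c" using c by metis
    then show ?thesis using False by (simp add: Pp_def dl_def)
  qed (simp add: Pp_def)
qed

lemma Dn_dl_crit: "crit n c \<Longrightarrow> Dn n (dl c) = 0"
  using DnPp_fun[of n "dl c"] by (simp only: Pp_dl_crit)

lemma HDn_dl: "typB n u \<Longrightarrow> Hh n (Dn n (dl u)) = dl u"
  using homotopy_fun[of n "dl u"] by (simp only: Hh_dl_typB Pp_dl_typB Dn_zero add_0_left add_0_right)

lemma chains_supp: "v \<in> chains n a b \<Longrightarrow> v m \<noteq> 0 \<Longrightarrow> m \<in> basis_bideg n a b"
  unfolding chains_def by blast

lemma chains_fin:
  assumes "v \<in> chains n a b" shows "finite {m. v m \<noteq> 0}"
proof -
  have "{m. v m \<noteq> 0} \<subseteq> basis_bideg n a b" using chains_supp[OF assms] by blast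
  then show ?thesis using finite_basis by (rule finite_subset)
qed

lemma chains_val: "v \<in> chains n a b \<Longrightarrow> v m \<noteq> 0 \<Longrightarrow> valid_mono n m"
  by (drule (1) chains_supp) (simp add: basis_bideg_def)

lemma d2_chains:
  assumes "v \<in> chains n a b" shows "d2 v = Dn n (v::mono \<Rightarrow> bit)"
  using d2_eq_Dn[OF chains_fin[OF assms] chains_val[OF assms]] .

lemma dl_chains: "m \<in> basis_bideg n a b \<Longrightarrow> dl m \<in> chains n a b"
  by (simp add: chains_def dl_def)

lemma Dn_chains:
  assumes v: "v \<in> chains n a (Suc b)"
  shows "Dn n v \<in> chains n a b"
  unfolding chains_def mem_Collect_eq
proof (intro allI impI)
  fix m' assume "Dn n v m' \<noteq> 0"
  then obtain j where j: "j \<in> Rs n m'" "v (pre j m') \<noteq> 0"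
    unfolding Dn_def by (meson sum.neutral)
  define p where "p = pre j m'"
  have pB: "p \<in> basis_bideg n a (Suc b)" using chains_supp[OF v j(2)] p_def by simp
  have j2: "2 \<le> fst m' j" "2*j \<notin> snd m'" "2*j < n" using j(1) by (auto simp: Rs_def)
  have m': "m' = post j p" unfolding p_def by (rule post_pre_id[OF j2(1,2), symmetric])
  have jp: "2*j \<in> snd p" by (simp add: p_def pre_def)
  have vp: "valid_mono n p" using pB by (simp add: basis_bideg_def)
  have "valid_mono n m'" unfolding m' using valid_post_iff[OF jp j2(3)] vp by simp
  moreover have "qdeg n m' = a" unfolding m' deg_post(1)[OF vp jp j2(3)] using pB by (simp add: basis_bideg_def)
  moreover have "tdeg n m' = b" using deg_post(2)[OF vp jp j2(3)] pB m' by (simp add: basis_bideg_def)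
  ultimately show "m' \<in> basis_bideg n a b" by (simp add: basis_bideg_def)
qed

lemma Hh_supp:
  assumes v: "v \<in> chains n a b" and h: "Hh n v u \<noteq> 0"
  shows "u \<in> basis_bideg n a (Suc b) \<and> typB n u"
proof -
  have tB: "typB n u" using h by (simp add: Hh_def split: if_splits)
  define j0 where "j0 = piv n u"
  have h2: "v (post j0 u) \<noteq> 0" using h tB by (simp add: Hh_def j0_def)
  have pB: "post j0 u \<in> basis_bideg n a b" by (rule chains_supp[OF v h2])
  have jp: "2*j0 \<in> snd u" using tB by (simp add: typB_def j0_def)
  have j0n: "2*j0 < n" using piv_in[of n u] tB by (auto simp: typB_def j0_def Jp_def)
  have vu: "valid_mono n u" using valid_post_iff[OF jp j0n] pB by (simp add: basis_bideg_def)
  have "qdeg n u = a" using deg_post(1)[OF vu jp j0n] pB by (simp add: basis_bideg_def)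
  moreover have "tdeg n u = Suc b" using deg_post(2)[OF vu jp j0n] pB by (simp add: basis_bideg_def)
  ultimately show ?thesis using vu tB by (simp add: basis_bideg_def)
qed

lemma Pp_supp:
  assumes v: "v \<in> chains n a b" and h: "Pp n v c \<noteq> 0"
  shows "c \<in> basis_bideg n a b \<and> crit n c"
proof -
  have "crit n c" "v c \<noteq> 0" using h by (simp_all add: Pp_def split: if_splits)
  then show ?thesis using chains_supp[OF v] by blast
qed


lemma span_image_Dn: "V.span (Dn n ` X) = Dn n ` V.span X"
  by (rule module_hom.span_image[OF hom_Dn])

lemma kh_dim_eq: "kh_dim TYPE(bit) n a b = card {c \<in> basis_bideg n a b. crit n c}"
proof -
  define U where "U = {u \<in> basis_bideg n a (Suc b). typB n u}"
  define K where "K = {c \<in> basis_bideg n a b. crit n c}"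
  define Z :: "(mono \<Rightarrow> bit) set" where "Z = {v \<in> chains n a b. d2 v = (\<lambda>_. 0)}"
  define Bd :: "(mono \<Rightarrow> bit) set" where "Bd = d2 ` chains n a (b+1)"
  have kh: "kh_dim TYPE(bit) n a b = V.dim Z - V.dim Bd"
    unfolding kh_dim_def Z_def Bd_def ..
  have finU: "finite U" unfolding U_def using finite_basis by (rule finite_subset[rotated]) blast
  have finK: "finite K" unfolding K_def using finite_basis by (rule finite_subset[rotated]) blast
  have UB: "u \<in> U \<Longrightarrow> typB n u" for u by (simp add: U_def)
  have KC: "c \<in> K \<Longrightarrow> crit n c" for c by (simp add: K_def)
  have UK: "U \<inter> K = {}" using UB KC typB_not_crit by blast
  have Z': "Z = {v \<in> chains n a b. Dn n v = 0}"
    unfolding Z_def zero_fun_def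
  proof (rule Collect_cong)
    fix v :: "mono \<Rightarrow> bit"
    show "(v \<in> chains n a b \<and> d2 v = (\<lambda>_. 0)) = (v \<in> chains n a b \<and> Dn n v = (\<lambda>_. 0))"
      using d2_chains[of v n a b] by auto
  qed
  have Bd': "Bd = Dn n ` chains n a (Suc b)"
    unfolding Bd_def Suc_eq_plus1 by (rule image_cong[OF refl d2_chains])
  have HhU: "Hh n v \<in> V.span (dl ` U)" if "v \<in> chains n a b" for v
    by (rule in_span_dl[OF finU]) (use Hh_supp[OF that] in \<open>simp add: U_def\<close>)
  have PpK: "Pp n v \<in> V.span (dl ` K)" if "v \<in> chains n a b" for v
    by (rule in_span_dl[OF finK]) (use Pp_supp[OF that] in \<open>simp add: K_def\<close>)
  have dlU: "dl u \<in> chains n a (Suc b)" if "u \<in> U" for u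
    using that by (intro dl_chains) (simp add: U_def)
  have dlK: "dl c \<in> chains n a b" if "c \<in> K" for c
    using that by (intro dl_chains) (simp add: K_def)

  define BB where "BB = Dn n ` dl ` U"
  have gfU: "\<And>x. x \<in> dl ` U \<Longrightarrow> Hh n (Dn n x) = x" using HDn_dl UB by blast
  note li1 = leftinv_indep[OF hom_Dn[of n] hom_Hh[of n] gfU indep_dl[of U], folded BB_def]
  have spanBB: "V.span BB = V.span Bd"
    unfolding V.span_eq
  proof
    show "BB \<subseteq> V.span Bd"
    proof
      fix x assume "x \<in> BB"
      then obtain u where u: "u \<in> U" "x = Dn n (dl u)" by (auto simp: BB_def)
      then have "x \<in> Bd" unfolding Bd' using dlU by blast
      then show "x \<in> V.span Bd" by (rule V.span_base)
    qed
    show "Bd \<subseteq> V.span BB"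
    proof
      fix x assume "x \<in> Bd"
      then obtain w where w: "w \<in> chains n a (Suc b)" "x = Dn n w" unfolding Bd' by blast
      have "Dn n (Hh n (Dn n w)) + Hh n (Dn n (Dn n w)) + Pp n (Dn n w) = Dn n w"
        by (rule homotopy_fun)
      then have x: "x = Dn n (Hh n (Dn n w))"
        unfolding w(2) by (simp only: DnDn_fun PpDn_fun Hh_zero add_0_right)
      have "Hh n (Dn n w) \<in> V.span (dl ` U)" by (rule HhU[OF Dn_chains[OF w(1)]])
      then have "x \<in> Dn n ` V.span (dl ` U)" unfolding x by (rule imageI)
      then show "x \<in> V.span BB" unfolding BB_def span_image_Dn .
    qed
  qed
  have cardBB: "card BB = card U"
    unfolding BB_def using card_image[OF li1(2)] card_image[OF inj_on_subset[OF inj_dl subset_UNIV]]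
    by simp
  have dimBd: "V.dim Bd = card U"
    using V.dim_eq_card[OF spanBB li1(1)] cardBB by simp

  define Phi where "Phi = (\<lambda>v. Dn n v + Pp n v)"
  define Psi where "Psi = (\<lambda>v. Hh n v + Pp n v)"
  have hPhi: "module_hom fscale fscale Phi" unfolding Phi_def by (rule hom_add[OF hom_Dn hom_Pp])
  have hPsi: "module_hom fscale fscale Psi" unfolding Psi_def by (rule hom_add[OF hom_Hh hom_Pp])
  have PhiU: "Phi (dl u) = Dn n (dl u)" if "u \<in> U" for u
    using UB[OF that] by (simp add: Phi_def Pp_dl_typB)
  have PhiK: "Phi (dl c) = dl c" if "c \<in> K" for c
    using KC[OF that] by (simp add: Phi_def Pp_dl_crit Dn_dl_crit)
  have PsiPhi: "Psi (Phi x) = x" if "x \<in> dl ` (U \<union> K)" for x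
  proof -
    from that obtain m where m: "m \<in> U \<union> K" "x = dl m" by blast
    show ?thesis
    proof (cases "m \<in> U")
      case True
      then show ?thesis unfolding m(2) PhiU[OF True] Psi_def
        using UB[OF True] by (simp add: HDn_dl PpDn_fun)
    next
      case False
      then have mK: "m \<in> K" using m(1) by blast
      then show ?thesis unfolding m(2) PhiK[OF mK] Psi_def
        using KC[OF mK] by (simp add: Hh_dl_crit Pp_dl_crit)
    qed
  qed
  define BZ where "BZ = Phi ` dl ` (U \<union> K)"
  have BZ': "BZ = Dn n ` dl ` U \<union> dl ` K"
  proof -
    have "BZ = Phi ` dl ` U \<union> Phi ` dl ` K" by (simp add: BZ_def image_Un)
    also have "Phi ` dl ` U = Dn n ` dl ` U"
      by (auto simp: PhiU image_iff)
    also have "Phi ` dl ` K = dl ` K"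
      by (auto simp: PhiK image_iff)
    finally show ?thesis .
  qed
  note li2 = leftinv_indep[OF hPhi hPsi PsiPhi indep_dl[of "U \<union> K"], folded BZ_def]
  have cardBZ: "card BZ = card U + card K"
  proof -
    have "card BZ = card (dl ` (U \<union> K))" unfolding BZ_def by (rule card_image[OF li2(2)])
    also have "\<dots> = card (U \<union> K)" by (rule card_image[OF inj_on_subset[OF inj_dl subset_UNIV]])
    also have "\<dots> = card U + card K" using finU finK UK by (rule card_Un_disjoint)
    finally show ?thesis .
  qed
  have spanBZ: "V.span BZ = V.span Z"
    unfolding V.span_eq
  proof
    show "BZ \<subseteq> V.span Z"
    proof
      fix x assume "x \<in> BZ"
      then have "x \<in> Z"
        unfolding BZ' Z'
      proof
        assume "x \<in> Dn n ` dl ` U"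
        then obtain u where u: "u \<in> U" "x = Dn n (dl u)" by blast
        show "x \<in> {v \<in> chains n a b. Dn n v = 0}"
          using Dn_chains[OF dlU[OF u(1)]] DnDn_fun u(2) by blast
      next
        assume "x \<in> dl ` K"
        then obtain c where c: "c \<in> K" "x = dl c" by blast
        show "x \<in> {v \<in> chains n a b. Dn n v = 0}"
          using dlK[OF c(1)] Dn_dl_crit[OF KC[OF c(1)]] c(2) by blast
      qed
      then show "x \<in> V.span Z" by (rule V.span_base)
    qed
    show "Z \<subseteq> V.span BZ"
    proof
      fix v assume "v \<in> Z"
      then have v: "v \<in> chains n a b" "Dn n v = 0" unfolding Z' by auto
      have "Dn n (Hh n v) + Hh n (Dn n v) + Pp n v = v" by (rule homotopy_fun)
      then have ve: "v = Dn n (Hh n v) + Pp n v" unfolding v(2) by (simp only: Hh_zero add_0_right)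
      have "Dn n (Hh n v) \<in> Dn n ` V.span (dl ` U)" using HhU[OF v(1)] by (rule imageI)
      then have "Dn n (Hh n v) \<in> V.span (Dn n ` dl ` U)" unfolding span_image_Dn .
      moreover have "V.span (Dn n ` dl ` U) \<subseteq> V.span BZ" unfolding BZ' by (rule V.span_mono) blast
      ultimately have a1: "Dn n (Hh n v) \<in> V.span BZ" by blast
      have "V.span (dl ` K) \<subseteq> V.span BZ" unfolding BZ' by (rule V.span_mono) blast
      then have a2: "Pp n v \<in> V.span BZ" using PpK[OF v(1)] by blast
      show "v \<in> V.span BZ" by (subst ve) (rule V.span_add[OF a1 a2])
    qed
  qed
  have dimZ: "V.dim Z = card U + card K"
    using V.dim_eq_card[OF spanBZ li2(1)] cardBZ by simp
  show ?thesis unfolding kh dimZ dimBd K_def by simp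
qed


unbundle fps_syntax

definition dsum :: "nat \<times> nat \<Rightarrow> nat \<times> nat \<Rightarrow> nat \<times> nat" where
  "dsum p q = (fst p + fst q, snd p + snd q)"

definition G :: "'x set \<Rightarrow> ('x \<Rightarrow> nat \<times> nat) \<Rightarrow> rat fps fps" where
  "G A d = Abs_fps (\<lambda>a. Abs_fps (\<lambda>b. of_nat (card {x\<in>A. d x = (a,b)})))"

definition ff :: "'x set \<Rightarrow> ('x \<Rightarrow> nat \<times> nat) \<Rightarrow> bool" where
  "ff A d \<longleftrightarrow> (\<forall>p. finite {x\<in>A. d x = p})"

lemma G_nth: "G A d $ a $ b = of_nat (card {x\<in>A. d x = (a,b)})"
  by (simp add: G_def)

lemma G_eqI: "(\<And>a b. F $ a $ b = H $ a $ b) \<Longrightarrow> F = (H :: rat fps fps)"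
  by (intro fps_ext) auto

lemma G_bij:
  assumes "bij_betw f A B" "\<And>x. x \<in> A \<Longrightarrow> dB (f x) = dA x"
  shows "G A dA = G B dB"
proof (rule G_eqI)
  fix a b
  have "bij_betw f {x\<in>A. dA x = (a,b)} {y\<in>B. dB y = (a,b)}"
    unfolding bij_betw_def
  proof
    show "inj_on f {x \<in> A. dA x = (a, b)}"
      using assms(1) by (auto simp: bij_betw_def intro: inj_on_subset)
    show "f ` {x \<in> A. dA x = (a, b)} = {y \<in> B. dB y = (a, b)}"
    proof
      show "f ` {x \<in> A. dA x = (a, b)} \<subseteq> {y \<in> B. dB y = (a, b)}"
        using assms by (auto simp: bij_betw_def)
      show "{y \<in> B. dB y = (a, b)} \<subseteq> f ` {x \<in> A. dA x = (a, b)}"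
      proof
        fix y assume y: "y \<in> {y \<in> B. dB y = (a, b)}"
        then obtain x where "x \<in> A" "y = f x" using assms(1) by (auto simp: bij_betw_def)
        then show "y \<in> f ` {x \<in> A. dA x = (a, b)}" using y assms(2) by auto
      qed
    qed
  qed
  then have "card {x\<in>A. dA x = (a,b)} = card {y\<in>B. dB y = (a,b)}" by (rule bij_betw_same_card)
  then show "G A dA $ a $ b = G B dB $ a $ b" by (simp add: G_nth)
qed

lemma fiber_decomp:
  "{z \<in> A \<times> B. dsum (dA (fst z)) (dB (snd z)) = (a,b)} =
   (\<Union>p\<in>{0..a}\<times>{0..b}. {x\<in>A. dA x = p} \<times> {y\<in>B. dB y = (a - fst p, b - snd p)})"
proof (intro equalityI subsetI)
  fix z assume z: "z \<in> {z \<in> A \<times> B. dsum (dA (fst z)) (dB (snd z)) = (a,b)}"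
  obtain x y where xy: "z = (x,y)" by (cases z)
  obtain i j where ij: "dA x = (i,j)" by (cases "dA x")
  obtain k l where kl: "dB y = (k,l)" by (cases "dB y")
  have "i + k = a" "j + l = b" using z xy ij kl by (auto simp: dsum_def)
  then show "z \<in> (\<Union>p\<in>{0..a}\<times>{0..b}. {x\<in>A. dA x = p} \<times> {y\<in>B. dB y = (a - fst p, b - snd p)})"
    using z xy ij kl by (auto intro!: bexI[of _ "(i,j)"])
next
  fix z assume "z \<in> (\<Union>p\<in>{0..a}\<times>{0..b}. {x\<in>A. dA x = p} \<times> {y\<in>B. dB y = (a - fst p, b - snd p)})"
  then obtain i j where ij: "i \<le> a" "j \<le> b" "z \<in> {x\<in>A. dA x = (i,j)} \<times> {y\<in>B. dB y = (a - i, b - j)}"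
    by auto
  then show "z \<in> {z \<in> A \<times> B. dsum (dA (fst z)) (dB (snd z)) = (a,b)}"
    by (auto simp: dsum_def)
qed

lemma ff_prod:
  assumes "ff A dA" "ff B dB"
  shows "ff (A \<times> B) (\<lambda>z. dsum (dA (fst z)) (dB (snd z)))"
  unfolding ff_def
proof
  fix p :: "nat \<times> nat"
  obtain a b where p: "p = (a,b)" by (cases p)
  show "finite {z \<in> A \<times> B. dsum (dA (fst z)) (dB (snd z)) = p}"
    unfolding p fiber_decomp using assms by (auto simp: ff_def)
qed

lemma G_prod:
  assumes "ff A dA" "ff B dB"
  shows "G (A \<times> B) (\<lambda>z. dsum (dA (fst z)) (dB (snd z))) = G A dA * G B dB"
proof (rule G_eqI)
  fix a b
  define FA where "FA p = {x\<in>A. dA x = p}" for p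
  define FB where "FB p = {y\<in>B. dB y = p}" for p
  have finA: "finite (FA p)" for p using assms(1) unfolding ff_def FA_def by (rule spec)
  have finB: "finite (FB p)" for p using assms(2) unfolding ff_def FB_def by (rule spec)
  have "card {z \<in> A \<times> B. dsum (dA (fst z)) (dB (snd z)) = (a,b)}
      = card (\<Union>p\<in>{0..a}\<times>{0..b}. FA p \<times> FB (a - fst p, b - snd p))"
    unfolding fiber_decomp FA_def FB_def ..
  also have "\<dots> = (\<Sum>p\<in>{0..a}\<times>{0..b}. card (FA p \<times> FB (a - fst p, b - snd p)))"
    apply (rule card_UN_disjoint)
      apply simp
     apply (simp add: finA finB)
    apply (auto simp: FA_def)
    done
  also have "\<dots> = (\<Sum>p\<in>{0..a}\<times>{0..b}. card (FA p) * card (FB (a - fst p, b - snd p)))"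
    by (simp add: card_cartesian_product)
  also have "\<dots> = (\<Sum>i=0..a. \<Sum>j=0..b. card (FA (i,j)) * card (FB (a - i, b - j)))"
    by (subst sum.cartesian_product) (simp add: split_def)
  finally have c: "card {z \<in> A \<times> B. dsum (dA (fst z)) (dB (snd z)) = (a,b)}
      = (\<Sum>i=0..a. \<Sum>j=0..b. card (FA (i,j)) * card (FB (a - i, b - j)))" .
  have "(G A dA * G B dB) $ a $ b = (\<Sum>i=0..a. (G A dA $ i * G B dB $ (a - i)) $ b)"
    by (simp add: fps_mult_nth fps_sum_nth)
  also have "\<dots> = (\<Sum>i=0..a. \<Sum>j=0..b. of_nat (card (FA (i,j))) * of_nat (card (FB (a - i, b - j))))"
    by (simp add: fps_mult_nth G_nth FA_def FB_def)
  also have "\<dots> = G (A \<times> B) (\<lambda>z. dsum (dA (fst z)) (dB (snd z))) $ a $ b"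
    unfolding G_nth c by simp
  finally show "G (A \<times> B) (\<lambda>z. dsum (dA (fst z)) (dB (snd z))) $ a $ b = (G A dA * G B dB) $ a $ b"
    by simp
qed

lemma mono_nth: "(qvar ^ p * tvar ^ r) $ a $ b = (if a = p \<and> b = r then 1 else 0)"
  by (simp add: fps_X_power_mult_nth)

lemma G_one:
  assumes "A = {x0}" "d x0 = (0,0)"
  shows "G A d = 1"
proof (rule G_eqI)
  fix a b
  have "{x\<in>A. d x = (a,b)} = (if a = 0 \<and> b = 0 then {x0} else {})" using assms by auto
  then show "G A d $ a $ b = (1::rat fps fps) $ a $ b" by (simp add: G_nth)
qed

lemma G_two:
  assumes "A = {x0, x1}" "x0 \<noteq> x1" "d x0 = (0,0)" "d x1 = (p,r)" "p > 0"
  shows "G A d = 1 + qvar ^ p * tvar ^ r"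
proof (rule G_eqI)
  fix a b
  have "{x\<in>A. d x = (a,b)} = (if a = 0 \<and> b = 0 then {x0} else {}) \<union> (if a = p \<and> b = r then {x1} else {})"
    using assms by auto
  moreover have "\<not> (a = 0 \<and> b = 0 \<and> a = p \<and> b = r)" using assms(5) by auto
  ultimately show "G A d $ a $ b = (1 + qvar ^ p * tvar ^ r) $ a $ b"
    unfolding G_nth fps_add_nth mono_nth using assms(2) by auto
qed

lemma inv_const1:
  fixes f :: "rat fps fps"
  assumes "f $ 0 = 1"
  shows "f * inverse f = 1"
proof -
  have e1: "inverse f = fps_right_inverse f (inverse (f $ 0))" by (rule fps_inverse_def)
  have e2: "inverse (f $ 0) = (1::rat fps)" by (simp only: assms fps_inverse_one)
  show ?thesis unfolding e1 e2 by (rule fps_right_inverse) (simp add: assms)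
qed

lemma const_mono: "p > 0 \<Longrightarrow> (qvar ^ p * tvar ^ r) $ 0 = 0"
  by (rule fps_ext) (simp add: mono_nth)

lemma G_geom:
  assumes p: "p > 0"
  shows "G (UNIV :: nat set) (\<lambda>e. (e * p, e * r)) = inverse (1 - qvar ^ p * tvar ^ r)"
proof -
  define g where "g = G (UNIV :: nat set) (\<lambda>e. (e * p, e * r))"
  define c where "c a b \<longleftrightarrow> (\<exists>e. a = e * p \<and> b = e * r)" for a b
  have gc: "g $ a $ b = (if c a b then 1 else 0)" for a b
  proof -
    have "{x. x * p = a \<and> x * r = b} = (if c a b then {a div p} else {})"
      using p by (auto simp: c_def)
    then show ?thesis by (simp add: g_def G_nth)
  qed
  have rec: "c a b \<longleftrightarrow> (a = 0 \<and> b = 0) \<or> (p \<le> a \<and> r \<le> b \<and> c (a - p) (b - r))" for a b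
  proof
    assume "c a b"
    then obtain e where e: "a = e * p" "b = e * r" by (auto simp: c_def)
    show "(a = 0 \<and> b = 0) \<or> (p \<le> a \<and> r \<le> b \<and> c (a - p) (b - r))"
    proof (cases e)
      case (Suc e')
      then have "a - p = e' * p" "b - r = e' * r" using e by auto
      then show ?thesis using e Suc by (auto simp: c_def)
    qed (use e in simp)
  next
    assume "(a = 0 \<and> b = 0) \<or> (p \<le> a \<and> r \<le> b \<and> c (a - p) (b - r))"
    then show "c a b"
    proof
      assume "a = 0 \<and> b = 0" then show "c a b" by (auto simp: c_def intro: exI[of _ 0])
    next
      assume h: "p \<le> a \<and> r \<le> b \<and> c (a - p) (b - r)"
      then obtain e where e: "a - p = e * p" "b - r = e * r" by (auto simp: c_def)
      have a1: "a = e * p + p" using h e(1) by linarith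
      have b1: "b = e * r + r" using h e(2) by linarith
      have "a = Suc e * p" "b = Suc e * r" using a1 b1 by simp_all
      then show "c a b" unfolding c_def by blast
    qed
  qed
  have c00: "c 0 0" by (auto simp: c_def intro: exI[of _ 0])
  have "(1 - qvar ^ p * tvar ^ r) * g = 1"
  proof (rule G_eqI)
    fix a b
    have x1: "(qvar ^ p * tvar ^ r * g) $ a = (if a < p then 0 else fps_X ^ r * g $ (a - p))"
      by (simp add: mult.assoc fps_X_power_mult_nth)
    have x2: "(qvar ^ p * tvar ^ r * g) $ a $ b = (if a < p then 0 else if b < r then 0 else g $ (a - p) $ (b - r))"
      unfolding x1 by (simp add: fps_X_power_mult_nth)
    have "((1 - qvar ^ p * tvar ^ r) * g) $ a $ b = g $ a $ b - (qvar ^ p * tvar ^ r * g) $ a $ b"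
      by (simp only: left_diff_distrib mult_1_left fps_sub_nth)
    also have "\<dots> = (if c a b then 1 else 0) - (if p \<le> a \<and> r \<le> b \<and> c (a - p) (b - r) then 1 else 0)"
      unfolding x2 gc by auto
    also have "\<dots> = (1::rat fps fps) $ a $ b"
      using rec[of a b] p c00 by auto
    finally show "((1 - qvar ^ p * tvar ^ r) * g) $ a $ b = (1::rat fps fps) $ a $ b" .
  qed
  moreover have "(1 - qvar ^ p * tvar ^ r) * inverse (1 - qvar ^ p * tvar ^ r) = 1"
    by (rule inv_const1) (simp add: const_mono[OF p] p)
  ultimately have "g = inverse (1 - qvar ^ p * tvar ^ r)"
  proof -
    assume h1: "(1 - qvar ^ p * tvar ^ r) * g = 1"
      and h2: "(1 - qvar ^ p * tvar ^ r) * inverse (1 - qvar ^ p * tvar ^ r) = 1"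
    have "g = g * ((1 - qvar ^ p * tvar ^ r) * inverse (1 - qvar ^ p * tvar ^ r))" by (simp only: h2 mult_1_right)
    also have "\<dots> = ((1 - qvar ^ p * tvar ^ r) * g) * inverse (1 - qvar ^ p * tvar ^ r)" by (simp only: ac_simps)
    also have "\<dots> = inverse (1 - qvar ^ p * tvar ^ r)" by (simp only: h1 mult_1_left)
    finally show ?thesis .
  qed
  then show ?thesis by (simp add: g_def)
qed


unbundle fps_syntax

definition Mset :: "nat \<Rightarrow> (nat \<Rightarrow> nat set) \<Rightarrow> (nat \<Rightarrow> bool) \<Rightarrow> mono set" where
  "Mset N P Q = {m. valid_mono N m \<and> (\<forall>k<N. fst m k \<in> P k) \<and> (\<forall>k\<in>snd m. Q k)}"
definition dg :: "nat \<Rightarrow> mono \<Rightarrow> nat \<times> nat" where "dg N m = (qdeg N m, tdeg N m)"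
definition xdeg :: "nat \<Rightarrow> nat \<Rightarrow> nat \<times> nat" where "xdeg k e = (e * (2*k+2), e * (2*k))"
definition sdeg :: "nat \<Rightarrow> bool \<Rightarrow> nat \<times> nat" where
  "sdeg k s = (if s then (2*k+4, 2*k+1) else (0,0))"
definition Bs :: "bool \<Rightarrow> bool set" where "Bs q = {s. s \<longrightarrow> q}"

lemma ff_Mset: "ff (Mset N P Q) (dg N)"
  unfolding ff_def
proof
  fix p :: "nat \<times> nat"
  obtain a b where p: "p = (a,b)" by (cases p)
  have "{x \<in> Mset N P Q. dg N x = p} \<subseteq> basis_bideg N a b"
    by (auto simp: Mset_def dg_def basis_bideg_def p)
  then show "finite {x \<in> Mset N P Q. dg N x = p}" using finite_basis by (rule finite_subset)
qed

lemma ff_x: "ff A (xdeg k)"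
  unfolding ff_def
proof
  fix p :: "nat \<times> nat"
  obtain a b where p: "p = (a,b)" by (cases p)
  have "{x \<in> A. xdeg k x = p} \<subseteq> {..a}"
  proof
    fix x assume "x \<in> {x \<in> A. xdeg k x = p}"
    then have "x * (2*k+2) = a" by (simp add: xdeg_def p)
    moreover have "x \<le> x * (2*k+2)" by simp
    ultimately show "x \<in> {..a}" by simp
  qed
  then show "finite {x \<in> A. xdeg k x = p}" by (rule finite_subset) simp
qed

lemma ff_s: "ff (A :: bool set) d"
  unfolding ff_def by simp

lemma sum_split_N:
  assumes "finite S"
  shows "(\<Sum>k\<in>S. h k) = (\<Sum>k\<in>S - {N}. h k) + (if N \<in> S then h N else (0::nat))"
proof (cases "N \<in> S")
  case True
  then show ?thesis using sum.remove[OF assms True, of h] by simp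
qed simp

lemma deg_split:
  assumes m: "valid_mono (Suc N) m"
  shows "dg (Suc N) m = dsum (dg N ((fst m)(N := 0), snd m - {N})) (dsum (xdeg N (fst m N)) (sdeg N (N \<in> snd m)))"
proof -
  have fS: "finite (snd m)" using m by (auto simp: valid_mono_def intro: finite_subset[of _ "{..<Suc N}"])
  have e1: "(\<Sum>k<N. ((fst m)(N := 0)) k * w k) = (\<Sum>k<N. fst m k * w k)" for w :: "nat \<Rightarrow> nat"
    by (rule sum.cong) auto
  show ?thesis
    unfolding dg_def qdeg_def tdeg_def dsum_def xdeg_def sdeg_def fst_conv snd_conv e1
      sum.lessThan_Suc sum_split_N[OF fS, of _ N]
    by (simp add: algebra_simps)
qed

lemma G_step:
  "G (Mset (Suc N) P Q) (dg (Suc N)) = G (Mset N P Q) (dg N) * (G (P N) (xdeg N) * G (Bs (Q N)) (sdeg N))"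
proof -
  define f where "f m = (((fst m)(N := 0), snd m - {N}), (fst m N, N \<in> snd m))" for m :: mono
  define g where "g z = ((fst (fst z))(N := fst (snd z)),
      if snd (snd z) then insert N (snd (fst z)) else snd (fst z))" for z :: "mono \<times> nat \<times> bool"
  have bij: "bij_betw f (Mset (Suc N) P Q) (Mset N P Q \<times> (P N \<times> Bs (Q N)))"
  proof (rule bij_betw_byWitness[where f'=g])
    show "\<forall>a\<in>Mset (Suc N) P Q. g (f a) = a"
    proof
      fix m assume "m \<in> Mset (Suc N) P Q"
      show "g (f m) = m"
        by (cases m) (auto simp: f_def g_def)
    qed
    show "\<forall>a'\<in>Mset N P Q \<times> (P N \<times> Bs (Q N)). f (g a') = a'"
    proof
      fix z assume z: "z \<in> Mset N P Q \<times> (P N \<times> Bs (Q N))"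
      obtain e S x s where zz: "z = ((e,S),(x,s))" by (metis prod.collapse)
      have v: "valid_mono N (e,S)" using z zz by (simp add: Mset_def)
      have eN: "e N = 0" using v by (simp add: valid_mono_def)
      have NS: "N \<notin> S" using v by (auto simp: valid_mono_def)
      have "(e(N := x))(N := 0) = e" using eN by auto
      then show "f (g z) = z" using NS unfolding zz f_def g_def by auto
    qed
    show "f ` Mset (Suc N) P Q \<subseteq> Mset N P Q \<times> (P N \<times> Bs (Q N))"
    proof
      fix y assume "y \<in> f ` Mset (Suc N) P Q"
      then obtain m where m: "m \<in> Mset (Suc N) P Q" "y = f m" by blast
      have v: "valid_mono (Suc N) m" "\<forall>k<Suc N. fst m k \<in> P k" "\<forall>k\<in>snd m. Q k"
        using m(1) by (auto simp: Mset_def)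
      have "valid_mono N ((fst m)(N := 0), snd m - {N})"
        using v(1) unfolding valid_mono_def by auto
      moreover have "\<forall>k<N. ((fst m)(N := 0)) k \<in> P k" using v(2) by auto
      moreover have "\<forall>k\<in>snd m - {N}. Q k" using v(3) by auto
      moreover have "fst m N \<in> P N" using v(2) by auto
      moreover have "N \<in> snd m \<longrightarrow> Q N" using v(3) by auto
      ultimately show "y \<in> Mset N P Q \<times> (P N \<times> Bs (Q N))"
        unfolding m(2) f_def by (simp add: Mset_def Bs_def)
    qed
    show "g ` (Mset N P Q \<times> (P N \<times> Bs (Q N))) \<subseteq> Mset (Suc N) P Q"
    proof
      fix y assume "y \<in> g ` (Mset N P Q \<times> (P N \<times> Bs (Q N)))"
      then obtain z where z: "z \<in> Mset N P Q \<times> (P N \<times> Bs (Q N))" "y = g z" by blast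
      obtain e S x s where zz: "z = ((e,S),(x,s))" by (metis prod.collapse)
      have v: "valid_mono N (e,S)" "\<forall>k<N. e k \<in> P k" "\<forall>k\<in>S. Q k" "x \<in> P N" "s \<longrightarrow> Q N"
        using z(1) zz by (auto simp: Mset_def Bs_def)
      have "valid_mono (Suc N) (e(N := x), if s then insert N S else S)"
        using v(1) unfolding valid_mono_def by auto
      moreover have "\<forall>k<Suc N. (e(N := x)) k \<in> P k" using v(2,4) by (auto simp: less_Suc_eq)
      moreover have "\<forall>k\<in>(if s then insert N S else S). Q k" using v(3,5) by auto
      ultimately show "y \<in> Mset (Suc N) P Q"
        unfolding z(2) zz g_def Mset_def fst_conv snd_conv mem_Collect_eq by blast
    qed
  qed
  have deg: "dsum (dg N (fst (f m))) (dsum (xdeg N (fst (snd (f m)))) (sdeg N (snd (snd (f m))))) = dg (Suc N) m"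
    if "m \<in> Mset (Suc N) P Q" for m
    using deg_split[of N m] that by (simp add: f_def Mset_def)
  have "G (Mset (Suc N) P Q) (dg (Suc N)) = G (Mset N P Q \<times> (P N \<times> Bs (Q N)))
      (\<lambda>z. dsum (dg N (fst z)) (dsum (xdeg N (fst (snd z))) (sdeg N (snd (snd z)))))"
    by (rule G_bij[where dA="dg (Suc N)" and
        dB="\<lambda>z. dsum (dg N (fst z)) (dsum (xdeg N (fst (snd z))) (sdeg N (snd (snd z))))"])
      (rule bij, rule deg)
  also have "\<dots> = G (Mset N P Q) (dg N) * G (P N \<times> Bs (Q N)) (\<lambda>w. dsum (xdeg N (fst w)) (sdeg N (snd w)))"
    using G_prod[OF ff_Mset[of N P Q] ff_prod[OF ff_x[of "P N" N] ff_s[of "Bs (Q N)" "sdeg N"]]] by simp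
  also have "G (P N \<times> Bs (Q N)) (\<lambda>w. dsum (xdeg N (fst w)) (sdeg N (snd w))) = G (P N) (xdeg N) * G (Bs (Q N)) (sdeg N)"
    by (rule G_prod[OF ff_x ff_s])
  finally show ?thesis .
qed

lemma G_Mset: "G (Mset N P Q) (dg N) = (\<Prod>k<N. G (P k) (xdeg k) * G (Bs (Q k)) (sdeg k))"
proof (induction N)
  case 0
  have "Mset 0 P Q = {(\<lambda>_. 0, {})}"
    by (auto simp: Mset_def valid_mono_def fun_eq_iff)
  moreover have "dg 0 (\<lambda>_. 0, {}) = (0,0)" by (simp add: dg_def qdeg_def tdeg_def)
  ultimately show ?case by (simp add: G_one)
next
  case (Suc N)
  then show ?case by (simp add: G_step)
qed


unbundle fps_syntax

abbreviation xm :: "nat \<Rightarrow> rat fps fps" where "xm k \<equiv> qvar ^ (2*k+2) * tvar ^ (2*k)"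
abbreviation sm :: "nat \<Rightarrow> rat fps fps" where "sm k \<equiv> qvar ^ (2*k+4) * tvar ^ (2*k+1)"

definition Pc :: "nat \<Rightarrow> nat \<Rightarrow> nat set" where "Pc n k = (if 2*k < n then {..1} else UNIV)"

lemma Gx: "G (Pc n k) (xdeg k) = (if 2*k < n then 1 + xm k else inverse (1 - xm k))"
proof (cases "2*k < n")
  case True
  have "{..1::nat} = {0,1}" by auto
  then have "G {..1::nat} (xdeg k) = 1 + xm k"
    by (intro G_two[of "{..1::nat}" 0 1 "xdeg k" "2*k+2" "2*k"]) (auto simp: xdeg_def)
  then show ?thesis using True by (simp add: Pc_def)
next
  case False
  have "G (UNIV::nat set) (xdeg k) = inverse (1 - xm k)"
    unfolding xdeg_def[abs_def] by (rule G_geom) simp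
  then show ?thesis using False by (simp add: Pc_def)
qed

lemma Gs: "G (Bs q) (sdeg k) = (if q then 1 + sm k else 1)"
proof (cases q)
  case True
  have "Bs q = {False, True}" using True by (auto simp: Bs_def)
  then have "G (Bs q) (sdeg k) = 1 + sm k"
    by (intro G_two[of "Bs q" False True "sdeg k" "2*k+4" "2*k+1"]) (auto simp: sdeg_def)
  then show ?thesis using True by simp
next
  case False
  have "Bs q = {False}" using False by (auto simp: Bs_def)
  then have "G (Bs q) (sdeg k) = 1" by (rule G_one) (simp add: sdeg_def)
  then show ?thesis using False by simp
qed

lemma crit_iff:
  assumes v: "valid_mono n m"
  shows "crit n m \<longleftrightarrow> (\<forall>k<n. fst m k \<in> Pc n k) \<and> (\<forall>k\<in>snd m. odd k)"
proof
  assume c: "crit n m"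
  then have c': "\<And>j. 2*j < n \<Longrightarrow> 2*j \<notin> snd m \<and> fst m j < 2"
    by (auto simp: crit_def Jp_def)
  have "\<forall>k<n. fst m k \<in> Pc n k"
  proof (intro allI impI)
    fix k assume "k < n"
    show "fst m k \<in> Pc n k"
    proof (cases "2*k < n")
      case True then show ?thesis using c'[OF True] by (simp add: Pc_def)
    qed (simp add: Pc_def)
  qed
  moreover have "\<forall>k\<in>snd m. odd k"
  proof
    fix k assume k: "k \<in> snd m"
    have kn: "k < n" using v k by (auto simp: valid_mono_def)
    show "odd k"
    proof
      assume "even k"
      then obtain j where j: "k = 2*j" by (rule evenE)
      then show False using c'[of j] kn k by auto
    qed
  qed
  ultimately show "(\<forall>k<n. fst m k \<in> Pc n k) \<and> (\<forall>k\<in>snd m. odd k)" ..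
next
  assume h: "(\<forall>k<n. fst m k \<in> Pc n k) \<and> (\<forall>k\<in>snd m. odd k)"
  show "crit n m" unfolding crit_def Jp_def
  proof (rule ccontr)
    assume "{j. 2 * j < n \<and> (2 * j \<in> snd m \<or> 2 \<le> fst m j)} \<noteq> {}"
    then obtain j where j: "2*j < n" "2 * j \<in> snd m \<or> 2 \<le> fst m j" by blast
    have "j < n" using j(1) by simp
    then have "fst m j \<in> Pc n j" using h by blast
    then have "fst m j \<le> 1" using j(1) by (simp add: Pc_def)
    moreover have "odd (2*j)" if "2*j \<in> snd m" using h that by blast
    ultimately show False using j(2) by auto
  qed
qed

lemma poincare_G: "poincare TYPE(bit) n = G (Mset n (Pc n) odd) (dg n)"
proof (rule G_eqI)
  fix a b
  have "{c \<in> basis_bideg n a b. crit n c} = {x \<in> Mset n (Pc n) odd. dg n x = (a,b)}"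
    using crit_iff by (auto simp: basis_bideg_def Mset_def dg_def)
  then show "poincare TYPE(bit) n $ a $ b = G (Mset n (Pc n) odd) (dg n) $ a $ b"
    by (simp add: poincare_def kh_dim_eq G_nth)
qed

lemma LHS_prod: "poincare TYPE(bit) n =
   (\<Prod>k<n. (if 2*k < n then 1 + xm k else inverse (1 - xm k)) * (if odd k then 1 + sm k else 1))"
  unfolding poincare_G G_Mset Gx Gs ..

lemma xm_sq: "xm i * xm i = qvar ^ (4*i+4) * tvar ^ (4*i)"
proof -
  have e: "4*i+4 = (2*i+2)+(2*i+2)" "4*i = 2*i+2*i" by simp_all
  show ?thesis unfolding e power_add by (simp add: ac_simps)
qed

lemma sm_2: "sm (2*i) = qvar ^ (4*i+4) * tvar ^ (4*i+1)"
proof -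
  have e: "2*(2*i)+4 = 4*i+4" "2*(2*i)+1 = 4*i+1" by simp_all
  show ?thesis unfolding e ..
qed

lemma inv_x: "(1 - xm k) * inverse (1 - xm k) = 1"
  by (rule inv_const1) (simp add: fps_X_power_mult_nth)
lemma inv_s: "(1 + sm k) * inverse (1 + sm k) = 1"
  by (rule inv_const1) (simp add: fps_X_power_mult_nth)

lemma factor_eq:
  "((1 + sm k) * inverse (1 - xm k)) * ((if 2*k < n then 1 - xm k * xm k else 1) *
     (if even k then inverse (1 + sm k) else 1))
   = (if 2*k < n then 1 + xm k else inverse (1 - xm k)) * (if odd k then 1 + sm k else 1)"
proof -
  define x where "x = xm k"
  define s where "s = sm k"
  define I where "I = inverse (1 - x)"
  define J where "J = inverse (1 + s)"
  have h1: "(1 - x) * I = 1" unfolding x_def I_def by (rule inv_x)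
  have h2: "(1 + s) * J = 1" unfolding s_def J_def by (rule inv_s)
  have q: "(1 - x) * (1 + x) = 1 - x * x" by (simp add: algebra_simps)
  have a1: "(1 + s) * I * ((1 - x * x) * J) = 1 + x"
  proof -
    have "(1 + s) * I * ((1 - x * x) * J) = ((1 + s) * J) * ((1 - x) * I) * (1 + x)"
      unfolding q[symmetric] by (simp only: ac_simps)
    then show ?thesis by (simp only: h1 h2 mult_1_left)
  qed
  have a2: "(1 + s) * I * (1 - x * x) = (1 + x) * (1 + s)"
  proof -
    have "(1 + s) * I * (1 - x * x) = ((1 - x) * I) * (1 + x) * (1 + s)"
      unfolding q[symmetric] by (simp only: ac_simps)
    then show ?thesis by (simp only: h1 mult_1_left)
  qed
  have a3: "(1 + s) * I * J = I"
  proof -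
    have "(1 + s) * I * J = ((1 + s) * J) * I" by (simp only: ac_simps)
    then show ?thesis by (simp only: h2 mult_1_left)
  qed
  have a4: "(1 + s) * I = I * (1 + s)" by (rule mult.commute)
  have e: "((1 + sm k) * inverse (1 - xm k)) * ((if 2*k < n then 1 - xm k * xm k else 1) *
     (if even k then inverse (1 + sm k) else 1)) = (1 + s) * I * ((if 2*k < n then 1 - x * x else 1) *
     (if even k then J else 1))"
    by (simp only: x_def s_def I_def J_def)
  have e2: "(if 2*k < n then 1 + xm k else inverse (1 - xm k)) * (if odd k then 1 + sm k else 1) =
     (if 2*k < n then 1 + x else I) * (if odd k then 1 + s else 1)"
    by (simp only: x_def s_def I_def)
  show ?thesis unfolding e e2
    apply (cases "2*k < n"; cases "even k")
       apply (simp_all only: if_True if_False a1 a2 a3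
        not_True_eq_False not_False_eq_True mult_1_left mult_1_right)
    apply (rule mult.commute)
    done
qed

lemma div_iff: "1 \<le> n \<Longrightarrow> (k \<le> (n - 1) div 2 \<longleftrightarrow> 2*k < (n::nat))"
  by presburger

theorem mainTheorem1:
  fixes n :: nat
  assumes "n \<ge> 1"
  shows "poincare TYPE(bit) n =
    (\<Prod>i<n. (1 + qvar ^ (2*i+4) * tvar ^ (2*i+1)) * inverse (1 - qvar ^ (2*i+2) * tvar ^ (2*i)))
  * (\<Prod>i\<in>{0..(n-1) div 2}. (1 - qvar ^ (4*i+4) * tvar ^ (4*i)) * inverse (1 + qvar ^ (4*i+4) * tvar ^ (4*i+1)))"
proof -
  define I where "I = {0..(n-1) div 2}"
  have I1: "I = {k \<in> {..<n}. 2*k < n}"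
  proof (rule set_eqI)
    fix k
    have "k \<le> (n - 1) div 2 \<longleftrightarrow> 2*k < n" by (rule div_iff[OF assms])
    then show "k \<in> I \<longleftrightarrow> k \<in> {k \<in> {..<n}. 2*k < n}" unfolding I_def by auto
  qed
  have I2: "(\<lambda>i. 2*i) ` I = {k \<in> {..<n}. even k}"
  proof
    show "(\<lambda>i. 2*i) ` I \<subseteq> {k \<in> {..<n}. even k}" unfolding I1 by auto
    show "{k \<in> {..<n}. even k} \<subseteq> (\<lambda>i. 2*i) ` I"
    proof
      fix k assume k: "k \<in> {k \<in> {..<n}. even k}"
      then obtain j where j: "k = 2*j" by (auto elim: evenE)
      then have "j \<in> I" using k unfolding I1 by auto
      then show "k \<in> (\<lambda>i. 2*i) ` I" using j by blast
    qed
  qed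
  have P1: "(\<Prod>i\<in>I. 1 - qvar ^ (4*i+4) * tvar ^ (4*i)) = (\<Prod>k<n. if 2*k < n then 1 - xm k * xm k else 1)"
    unfolding I1 xm_sq by (rule prod.inter_filter) simp
  have "(\<Prod>i\<in>I. inverse (1 + qvar ^ (4*i+4) * tvar ^ (4*i+1))) = (\<Prod>i\<in>I. inverse (1 + sm (2*i)))"
    unfolding sm_2 ..
  also have "\<dots> = (\<Prod>k\<in>(\<lambda>i. 2*i) ` I. inverse (1 + sm k))"
    by (rule prod.reindex[symmetric, unfolded comp_def]) (auto simp: inj_on_def)
  also have "\<dots> = (\<Prod>k<n. if even k then inverse (1 + sm k) else 1)"
    unfolding I2 by (rule prod.inter_filter) simp
  finally have P2: "(\<Prod>i\<in>I. inverse (1 + qvar ^ (4*i+4) * tvar ^ (4*i+1))) = (\<Prod>k<n. if even k then inverse (1 + sm k) else 1)" .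
  have S: "(\<Prod>i\<in>I. (1 - qvar ^ (4*i+4) * tvar ^ (4*i)) * inverse (1 + qvar ^ (4*i+4) * tvar ^ (4*i+1)))
     = (\<Prod>k<n. if 2*k < n then 1 - xm k * xm k else 1) * (\<Prod>k<n. if even k then inverse (1 + sm k) else 1)"
    by (simp only: prod.distrib P1 P2)
  have "(\<Prod>i<n. (1 + sm i) * inverse (1 - xm i))
      * (\<Prod>i\<in>I. (1 - qvar ^ (4*i+4) * tvar ^ (4*i)) * inverse (1 + qvar ^ (4*i+4) * tvar ^ (4*i+1)))
      = (\<Prod>i<n. (1 + sm i) * inverse (1 - xm i))
      * ((\<Prod>k<n. if 2*k < n then 1 - xm k * xm k else 1) * (\<Prod>k<n. if even k then inverse (1 + sm k) else 1))"
    unfolding S ..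
  also have "\<dots> = (\<Prod>k<n. ((1 + sm k) * inverse (1 - xm k)) * ((if 2*k < n then 1 - xm k * xm k else 1) *
     (if even k then inverse (1 + sm k) else 1)))"
    by (simp only: prod.distrib)
  also have "\<dots> = (\<Prod>k<n. (if 2*k < n then 1 + xm k else inverse (1 - xm k)) * (if odd k then 1 + sm k else 1))"
    unfolding factor_eq ..
  also have "\<dots> = poincare TYPE(bit) n" by (rule LHS_prod[symmetric])
  finally have F: "(\<Prod>i<n. (1 + sm i) * inverse (1 - xm i))
      * (\<Prod>i\<in>I. (1 - qvar ^ (4*i+4) * tvar ^ (4*i)) * inverse (1 + qvar ^ (4*i+4) * tvar ^ (4*i+1)))
      = poincare TYPE(bit) n" .
  show ?thesis using F unfolding I_def by (rule sym)
qed


end
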